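(* Let $\theta_p:C_2^{\rm SLB}(\mathbb Z_p)\to\mathbb Z_p$ be the $2$-cocycle given on generators by \[ \theta_p((a,b),(a,c))=(a-b)\,\frac{(a-b+2c)^p+(a+b)^p-2(a+c)^p}{p}\pmod p \] (computed with integer lifts, numerator in $\mathbb Z$). Let $D$ be a diagram of a Dehn $p$-colorable knot, $C$ a Dehn $p$-coloring of $D$, $s\in\mathbb Z_p^\times$, $t\in\mathbb Z_p$, and $C'=sC+t$ (the map $x\mapsto sC(x)+t$, which is again a Dehn $p$-coloring of $D$). Then \[ \theta_p(W(D,C'))=s^2\,\theta_p(W(D,C)). \]
   Context: Let $p$ be an odd prime, $X=\mathbb Z_p$, $[a,b,c]=a-b+c$, $\rho((a,b))=(b,a)$, $(a,b)\,\underline{\star}\,(a,c)=(c,[a,b,c])$, $(a,b)\,\overline{\star}\,(a,c)=(c,[a,c,b])$. For $n\ge1$ let $C_n^{\rm lb}(X)$ be the free abelian group on tuples $((a,b_1),\dots,(a,b_n))$, $a,b_i\in X$; $D_n^{\rm lb}(X)$ the subgroup generated by tuples with $b_i=b_{i+1}$ for some $i$; $D_n^{\rm lb}(X,\rho)$ the subgroup generated by all $((a,b_1),\dots,(a,b_n))+((a,b_1)\underline\star(a,b_i),\dots,(a,b_{i-1})\underline\star(a,b_i),\rho((a,b_i)),(a,b_{i+1})\overline\star(a,b_i),\dots,(a,b_n)\overline\star(a,b_i))$; and $C_n^{\rm SLB}(X)=C_n^{\rm lb}(X)/(D_n^{\rm lb}(X)+D_n^{\rm lb}(X,\rho))$.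 (The formula for $\theta_p$ is well defined on this quotient.) Dehn $p$-colorings: for a knot diagram $D$ with region set $\mathcal R(D)$, at each crossing label the four regions $x_1,x_2,x_3,x_4$ so that $x_2$ is adjacent to $x_1$ across an under-arc, $x_3$ adjacent to $x_1$ across the over-arc, $x_4$ opposite $x_1$; a Dehn $p$-coloring is $C:\mathcal R(D)\to\mathbb Z_p$ with $C(x_1)+C(x_3)=C(x_2)+C(x_4)$ at every crossing. At each crossing $\chi$ choose a specified region $x_1$, put $a=C(x_1),b=C(x_2),c=C(x_3)$, $w_\chi=\varepsilon((a,b),(a,c))\in C_2^{\rm SLB}(X)$ with $\varepsilon=+1$ if $(n_o,n_u)$ is a positively oriented basis of $\mathbb R^2$ and $-1$ otherwise ($n_u$ the normal vector from $x_1$ to $x_2$, $n_o$ from $x_1$ to $x_3$); $W(D,C)=\sum_\chi w_\chi$, which is independent of the choices of specified regions. *)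

theory Defs
  imports "HOL-Computational_Algebra.Primes"
begin

(* Combinatorial model of a knot diagram with n crossings (a 4-valent combinatorial map).
   Darts (c,q), c < n, q < 4: the four half-edges at crossing c, listed counterclockwise;
   q = 0,2 are the two halves of the under-strand, q = 1,3 the two halves of the over-strand.
   nb d is the dart at the other end of the edge of d.
   Corner (c,q) = the sector at crossing c between dart q and dart q+1 (counterclockwise);
   corners are identified with darts (c,q). *)

definition darts :: "nat \<Rightarrow> (nat \<times> nat) set" where
  "darts n = {..<n} \<times> {..<4}"

(* travelling along the knot: arrive at dart (c,q), go straight through to (c,q+2), follow edge *)
definition trav :: "(nat \<times> nat \<Rightarrow> nat \<times> nat) \<Rightarrow> nat \<times> nat \<Rightarrow> nat \<times> nat" where
  "trav nb d = nb (fst d, (snd d + 2) mod 4)"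

(* walking around a face: corner (c,q) is followed by corner nb (c,q+1) *)
definition fstep :: "(nat \<times> nat \<Rightarrow> nat \<times> nat) \<Rightarrow> nat \<times> nat \<Rightarrow> nat \<times> nat" where
  "fstep nb d = nb (fst d, (snd d + 1) mod 4)"

definition region_of :: "(nat \<times> nat \<Rightarrow> nat \<times> nat) \<Rightarrow> nat \<times> nat \<Rightarrow> (nat \<times> nat) set" where
  "region_of nb d = {(fstep nb ^^ k) d | k. True}"

definition regions :: "nat \<Rightarrow> (nat \<times> nat \<Rightarrow> nat \<times> nat) \<Rightarrow> (nat \<times> nat) set set" where
  "regions n nb = region_of nb ` darts n"

(* a knot diagram: nb is a fixed-point-free involution on darts; the curve has a single
   component (every dart is reached travelling from the under-strand at crossing 0 in one of the
   two directions); the map is planar (Euler: V - E + F = 2 with V = n, E = 2n). *)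
definition knot_diagram :: "nat \<Rightarrow> (nat \<times> nat \<Rightarrow> nat \<times> nat) \<Rightarrow> bool" where
  "knot_diagram n nb \<longleftrightarrow> 1 \<le> n
     \<and> (\<forall>d\<in>darts n. nb d \<in> darts n \<and> nb d \<noteq> d \<and> nb (nb d) = d)
     \<and> (\<forall>d\<in>darts n. \<exists>k. (trav nb ^^ k) (0,0) = d \<or> (trav nb ^^ k) (0,2) = d)
     \<and> card (regions n nb) = n + 2"

(* Dehn p-coloring: colour of each corner in Z_p = {0..<p}, constant on regions;
   at crossing c with x1 = corner 0: x2 = corner 3 (across under-arc), x3 = corner 1
   (across over-arc), x4 = corner 2; condition C(x1)+C(x3) = C(x2)+C(x4). *)
definition dehn_coloring :: "nat \<Rightarrow> nat \<Rightarrow> (nat \<times> nat \<Rightarrow> nat \<times> nat) \<Rightarrow> (nat \<times> nat \<Rightarrow> int) \<Rightarrow> bool" where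
  "dehn_coloring p n nb C \<longleftrightarrow>
     (\<forall>d\<in>darts n. 0 \<le> C d \<and> C d < int p)
     \<and> (\<forall>d\<in>darts n. C (fstep nb d) = C d)
     \<and> (\<forall>c<n. (C (c,0) + C (c,1)) mod int p = (C (c,3) + C (c,2)) mod int p)"

(* colour of the arc containing dart (c,q): sum of the two regions on its sides *)
definition arc_color :: "nat \<Rightarrow> (nat \<times> nat \<Rightarrow> int) \<Rightarrow> nat \<times> nat \<Rightarrow> int" where
  "arc_color p C d = (C (fst d, (snd d + 3) mod 4) + C d) mod int p"

definition dehn_colorable :: "nat \<Rightarrow> nat \<Rightarrow> (nat \<times> nat \<Rightarrow> nat \<times> nat) \<Rightarrow> bool" where
  "dehn_colorable p n nb \<longleftrightarrow> (\<exists>C. dehn_coloring p n nb C \<and>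
      (\<exists>d\<in>darts n. \<exists>e\<in>darts n. arc_color p C d \<noteq> arc_color p C e))"

(* generator ((a,b),(a,c)) of C_2^lb encoded as (a,b,c); chains of C_2^lb as finitely
   supported integer-valued functions on generators *)
type_synonym chain2 = "int \<times> int \<times> int \<Rightarrow> int"

(* weight of crossing c with specified corner q = sel c:
   eps = +1 for q even, -1 for q odd (derived from the counterclockwise convention) *)
definition cross_eps :: "nat \<Rightarrow> int" where
  "cross_eps q = (if even q then 1 else -1)"

definition cross_gen :: "(nat \<times> nat \<Rightarrow> int) \<Rightarrow> nat \<Rightarrow> nat \<Rightarrow> int \<times> int \<times> int" where
  "cross_gen C c q =
     (C (c, q),
      C (c, if even q then (q + 3) mod 4 else (q + 1) mod 4),
      C (c, if even q then (q + 1) mod 4 else (q + 3) mod 4))"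

definition W :: "nat \<Rightarrow> (nat \<times> nat \<Rightarrow> int) \<Rightarrow> (nat \<Rightarrow> nat) \<Rightarrow> chain2" where
  "W n C sel = (\<lambda>g. \<Sum>c<n. if cross_gen C c (sel c) = g then cross_eps (sel c) else 0)"

definition theta_gen :: "nat \<Rightarrow> int \<times> int \<times> int \<Rightarrow> int" where
  "theta_gen p g = (case g of (a0, b0, c0) \<Rightarrow>
      let a = a0 mod int p; b = b0 mod int p; c = c0 mod int p in
      ((a - b) * (((a - b + 2 * c) ^ p + (a + b) ^ p - 2 * (a + c) ^ p) div int p)) mod int p)"

definition theta :: "nat \<Rightarrow> chain2 \<Rightarrow> int" where
  "theta p w = (\<Sum>g\<in>{g. w g \<noteq> 0}. w g * theta_gen p g) mod int p"

end

theory Submission imports Defs "HOL-Number_Theory.Number_Theory" begin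

lemma fermat_int:
  fixes x :: int assumes p: "prime p"
  shows "[x ^ p = x] (mod int p)"
proof -
  define r where "r = nat (x mod int p)"
  have pp: "p > 0" using p prime_gt_0_nat by blast
  have xr: "[x = int r] (mod int p)" unfolding r_def using pp by (simp add: cong_def)
  have rlt: "r < p" unfolding r_def using pp by (simp add: nat_less_iff)
  have "[int r ^ p = int r] (mod int p)"
  proof (cases "p dvd r")
    case True
    then have "r = 0" using rlt by (metis dvd_imp_le le_antisym less_imp_le_nat nat_neq_iff not_gr0)
    then show ?thesis using pp by (simp add: zero_power)
  next
    case False
    then have "[r ^ (p - 1) = 1] (mod p)" using fermat_theorem p by blast
    then have "[r ^ (p - 1) * r = 1 * r] (mod p)" by (rule cong_scalar_right)
    then have "[r ^ p = r] (mod p)" using pp by (metis Suc_diff_1 mult.commute mult_1 power_Suc)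
    then show ?thesis by (metis cong_int_iff of_nat_power)
  qed
  moreover have "[x ^ p = int r ^ p] (mod int p)" using xr by (rule cong_pow)
  ultimately show ?thesis using xr by (meson cong_sym cong_trans)
qed

lemma pow_cong_sq:
  fixes x y :: int assumes p: "prime p" and xy: "[x = y] (mod int p)"
  shows "[x ^ p = y ^ p] (mod (int p)^2)"
proof -
  have pp: "p > 0" using p prime_gt_0_nat by blast
  have e: "x^p - y^p = (x - y) * (\<Sum>i<p. y^(p - Suc i) * x^i)" by (rule power_diff_sumr2)
  have "[(\<Sum>i<p. y^(p - Suc i) * x^i) = (\<Sum>i<p. y^(p - Suc i) * y^i)] (mod int p)"
    by (intro cong_sum cong_scalar_left cong_pow xy)
  also have "(\<Sum>i<p. y^(p - Suc i) * y^i) = (\<Sum>i<p. y^(p - 1))"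
    by (intro sum.cong refl) (simp add: power_add[symmetric])
  also have "\<dots> = int p * y^(p-1)" by simp
  finally have "int p dvd (\<Sum>i<p. y^(p - Suc i) * x^i)" by (simp add: cong_0_iff cong_dvd_iff)
  moreover have "int p dvd (x - y)" using xy by (simp add: cong_iff_dvd_diff)
  ultimately have "int p * int p dvd (x - y) * (\<Sum>i<p. y^(p - Suc i) * x^i)"
    by (simp add: mult_dvd_mono)
  then show ?thesis by (simp add: cong_iff_dvd_diff e power2_eq_square)
qed

definition Nf :: "nat \<Rightarrow> int \<Rightarrow> int \<Rightarrow> int \<Rightarrow> int" where
  "Nf p A B Z = A^p + B^p - 2*Z^p"

definition Tf :: "nat \<Rightarrow> int \<Rightarrow> int \<Rightarrow> int \<Rightarrow> int \<Rightarrow> int" where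
  "Tf p u A B Z = (u * (Nf p A B Z div int p)) mod int p"

lemma Nf_dvd:
  assumes p: "prime p" and h: "[A + B = 2*Z] (mod int p)"
  shows "int p dvd Nf p A B Z"
proof -
  have "[Nf p A B Z = A + B - 2*Z] (mod int p)"
    unfolding Nf_def using fermat_int[OF p]
    by (intro cong_diff cong_add cong_scalar_left) auto
  moreover have "[A + B - 2*Z = 0] (mod int p)" using h by (simp add: cong_iff_dvd_diff)
  ultimately show ?thesis by (metis cong_0_iff cong_trans)
qed

lemma Nf_cong:
  assumes p: "prime p" and "[A = A'] (mod int p)" "[B = B'] (mod int p)" "[Z = Z'] (mod int p)"
  shows "[Nf p A B Z = Nf p A' B' Z'] (mod (int p)^2)"
  unfolding Nf_def using assms
  by (intro cong_diff cong_add cong_scalar_left pow_cong_sq) auto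

lemma Tf_cong:
  assumes p: "prime p" and u: "[u = u'] (mod int p)" and A: "[A = A'] (mod int p)"
    and B: "[B = B'] (mod int p)" and Z: "[Z = Z'] (mod int p)" and h: "[A + B = 2*Z] (mod int p)"
  shows "Tf p u A B Z = Tf p u' A' B' Z'"
proof -
  have h': "[A' + B' = 2*Z'] (mod int p)"
  proof -
    have "[A' + B' = A + B] (mod int p)" using A B by (intro cong_add) (auto simp: cong_sym)
    also note h
    also have "[2*Z = 2*Z'] (mod int p)" using Z by (intro cong_scalar_left)
    finally show ?thesis .
  qed
  obtain x where x: "Nf p A B Z = int p * x" using Nf_dvd[OF p h] by blast
  obtain y where y: "Nf p A' B' Z' = int p * y" using Nf_dvd[OF p h'] by blast
  have "[int p * x = int p * y] (mod int p * int p)"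
    using Nf_cong[OF p A B Z] x y by (simp add: power2_eq_square)
  then have "int p * int p dvd int p * (x - y)" by (simp add: cong_iff_dvd_diff right_diff_distrib)
  moreover have "int p \<noteq> 0" using p by auto
  ultimately have "int p dvd (x - y)" by simp
  then have xy: "[x = y] (mod int p)" by (simp add: cong_iff_dvd_diff)
  have "x = Nf p A B Z div int p" using x p by simp
  moreover have "y = Nf p A' B' Z' div int p" using y p by simp
  ultimately show ?thesis unfolding Tf_def using cong_mult[OF u xy] by (simp add: cong_def)
qed

lemma theta_gen_Tf:
  assumes p: "prime p"
  shows "theta_gen p (a, b, c) = Tf p (a - b) (a - b + 2*c) (a + b) (a + c)"
proof -
  let ?P = "int p"
  have "theta_gen p (a, b, c) = Tf p (a mod ?P - b mod ?P) (a mod ?P - b mod ?P + 2*(c mod ?P))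
          (a mod ?P + b mod ?P) (a mod ?P + c mod ?P)"
    unfolding theta_gen_def Tf_def Nf_def Let_def by simp
  also have "\<dots> = Tf p (a - b) (a - b + 2*c) (a + b) (a + c)"
    apply (rule Tf_cong[OF p])
    apply (intro cong_add cong_diff cong_scalar_left; simp)+
    apply (simp add: cong_def mod_simps)
    done
  finally show ?thesis .
qed

lemma Tf_swap: "Tf p u A B Z = Tf p u B A Z"
  unfolding Tf_def Nf_def by (simp add: add.commute)

lemma Tf_neg: "Tf p (-u) A B Z = (- Tf p u A B Z) mod int p"
  unfolding Tf_def by (simp add: mod_minus_eq)

definition Vc :: "nat \<Rightarrow> (nat \<times> nat \<Rightarrow> int) \<Rightarrow> nat \<Rightarrow> int" where
  "Vc p C c = Tf p (C(c,0) - C(c,3)) (C(c,0) - C(c,3) + 2*C(c,1)) (C(c,0) + C(c,3)) (C(c,0) + C(c,1))"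

lemma lin_cong:
  fixes X Y D m :: int
  assumes "P dvd D" "X - Y = m * D"
  shows "[X = Y] (mod P)"
  using assms by (simp add: cong_iff_dvd_diff)

lemma cross_indep:
  assumes p: "prime p" and dehn: "(C(c,0) + C(c,1)) mod int p = (C(c,3) + C(c,2)) mod int p"
    and q: "q < 4"
  shows "[cross_eps q * theta_gen p (cross_gen C c q) = Vc p C c] (mod int p)"
proof -
  let ?P = "int p"
  define D where "D = C(c,0) + C(c,1) - C(c,3) - C(c,2)"
  have dD: "?P dvd D" unfolding D_def using dehn by (simp add: mod_eq_dvd_iff diff_diff_eq)
  have V0: "Vc p C c = Tf p (C(c,0) - C(c,3)) (C(c,0) - C(c,3) + 2*C(c,1)) (C(c,0) + C(c,3)) (C(c,0) + C(c,1))"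
    by (simp add: Vc_def)
  have Vm: "Tf p (-(C(c,0) - C(c,3))) (C(c,0) - C(c,3) + 2*C(c,1)) (C(c,0) + C(c,3)) (C(c,0) + C(c,1))
      = (- Vc p C c) mod ?P" unfolding Vc_def by (rule Tf_neg)
  have Vm': "Tf p (-(C(c,0) - C(c,3))) (C(c,0) + C(c,3)) (C(c,0) - C(c,3) + 2*C(c,1)) (C(c,0) + C(c,1))
      = (- Vc p C c) mod ?P" by (metis Vm Tf_swap)
  have V': "Tf p (C(c,0) - C(c,3)) (C(c,0) + C(c,3)) (C(c,0) - C(c,3) + 2*C(c,1)) (C(c,0) + C(c,1))
      = Vc p C c" by (simp add: Vc_def Tf_swap)
  have neg: "[-1 * ((- V) mod ?P) = V] (mod ?P)" for V :: int
    by (simp add: cong_def mod_minus_eq)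
  consider "q = 0" | "q = 1" | "q = 2" | "q = 3" using q by linarith
  then show ?thesis
  proof cases
    case 1
    then show ?thesis by (simp add: cross_gen_def cross_eps_def theta_gen_Tf[OF p] Vc_def)
  next
    case 2
    have "theta_gen p (cross_gen C c q) = Tf p (C(c,1) - C(c,2)) (C(c,1) - C(c,2) + 2*C(c,0)) (C(c,1) + C(c,2)) (C(c,1) + C(c,0))"
      proof -
        have g: "cross_gen C c q = (C(c,1), C(c,2), C(c,0))" using 2 by (simp add: cross_gen_def; simp add: numeral_2_eq_2)
        show ?thesis unfolding g by (rule theta_gen_Tf[OF p])
      qed
    also have "\<dots> = Tf p (-(C(c,0) - C(c,3))) (C(c,0) + C(c,3)) (C(c,0) - C(c,3) + 2*C(c,1)) (C(c,0) + C(c,1))"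
      apply (rule Tf_cong[OF p])
      apply (rule lin_cong[OF dD, where m=1]; simp add: D_def)
      apply (rule lin_cong[OF dD, where m=1]; simp add: D_def)
      apply (rule lin_cong[OF dD, where m="-1"]; simp add: D_def)
      apply (rule lin_cong[OF dD, where m=0]; simp add: D_def)
      apply (rule lin_cong[OF dD, where m=0]; simp add: D_def)
      done
    finally show ?thesis using 2 Vm' neg by (simp add: cross_eps_def)
  next
    case 3
    have "theta_gen p (cross_gen C c q) = Tf p (C(c,2) - C(c,1)) (C(c,2) - C(c,1) + 2*C(c,3)) (C(c,2) + C(c,1)) (C(c,2) + C(c,3))"
      proof -
        have g: "cross_gen C c q = (C(c,2), C(c,1), C(c,3))" using 3 by (simp add: cross_gen_def; simp add: numeral_2_eq_2)
        show ?thesis unfolding g by (rule theta_gen_Tf[OF p])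
      qed
    also have "\<dots> = Tf p (C(c,0) - C(c,3)) (C(c,0) + C(c,3)) (C(c,0) - C(c,3) + 2*C(c,1)) (C(c,0) + C(c,1))"
      apply (rule Tf_cong[OF p])
      apply (rule lin_cong[OF dD, where m="-1"]; simp add: D_def)
      apply (rule lin_cong[OF dD, where m="-1"]; simp add: D_def)
      apply (rule lin_cong[OF dD, where m="-1"]; simp add: D_def)
      apply (rule lin_cong[OF dD, where m="-1"]; simp add: D_def)
      apply (rule lin_cong[OF dD, where m=0]; simp add: D_def)
      done
    finally show ?thesis using 3 V' by (simp add: cross_eps_def)
  next
    case 4
    have "theta_gen p (cross_gen C c q) = Tf p (C(c,3) - C(c,0)) (C(c,3) - C(c,0) + 2*C(c,2)) (C(c,3) + C(c,0)) (C(c,3) + C(c,2))"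
      proof -
        have g: "cross_gen C c q = (C(c,3), C(c,0), C(c,2))" using 4 by (simp add: cross_gen_def; simp add: numeral_2_eq_2)
        show ?thesis unfolding g by (rule theta_gen_Tf[OF p])
      qed
    also have "\<dots> = Tf p (-(C(c,0) - C(c,3))) (C(c,0) - C(c,3) + 2*C(c,1)) (C(c,0) + C(c,3)) (C(c,0) + C(c,1))"
      apply (rule Tf_cong[OF p])
      apply (rule lin_cong[OF dD, where m=0]; simp add: D_def)
      apply (rule lin_cong[OF dD, where m="-2"]; simp add: D_def)
      apply (rule lin_cong[OF dD, where m=0]; simp add: D_def)
      apply (rule lin_cong[OF dD, where m="-1"]; simp add: D_def)
      apply (rule lin_cong[OF dD, where m=0]; simp add: D_def)
      done
    finally show ?thesis using 4 Vm neg by (simp add: cross_eps_def)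
  qed
qed

lemma theta_W:
  "theta p (W n C sel) = (\<Sum>c<n. cross_eps (sel c) * theta_gen p (cross_gen C c (sel c))) mod int p"
proof -
  let ?g = "\<lambda>c. cross_gen C c (sel c)"
  let ?G = "?g ` {..<n}"
  let ?w = "W n C sel"
  have sub: "{g. ?w g \<noteq> 0} \<subseteq> ?G"
  proof
    fix g assume "g \<in> {g. ?w g \<noteq> 0}"
    then have "(\<Sum>c<n. if ?g c = g then cross_eps (sel c) else 0) \<noteq> 0" by (simp add: W_def)
    then have "\<exists>c<n. ?g c = g"
    proof (rule contrapos_np)
      assume "\<not> (\<exists>c<n. ?g c = g)"
      then show "(\<Sum>c<n. if ?g c = g then cross_eps (sel c) else 0) = 0" by (intro sum.neutral) auto
    qed
    then obtain c where "c < n" "?g c = g" by blast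
    then show "g \<in> ?G" by blast
  qed
  have "(\<Sum>g\<in>{g. ?w g \<noteq> 0}. ?w g * theta_gen p g) = (\<Sum>g\<in>?G. ?w g * theta_gen p g)"
    by (rule sum.mono_neutral_left) (use sub in auto)
  also have "\<dots> = (\<Sum>g\<in>?G. \<Sum>c<n. if ?g c = g then cross_eps (sel c) * theta_gen p g else 0)"
    unfolding W_def sum_distrib_right by (intro sum.cong refl) simp
  also have "\<dots> = (\<Sum>c<n. \<Sum>g\<in>?G. if ?g c = g then cross_eps (sel c) * theta_gen p g else 0)"
    by (rule sum.swap)
  also have "\<dots> = (\<Sum>c<n. cross_eps (sel c) * theta_gen p (?g c))"
  proof (rule sum.cong[OF refl])
    fix c assume "c \<in> {..<n}"
    then have "?g c \<in> ?G" by blast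
    then show "(\<Sum>g\<in>?G. if ?g c = g then cross_eps (sel c) * theta_gen p g else 0) = cross_eps (sel c) * theta_gen p (?g c)"
      by (simp add: sum.delta)
  qed
  finally show ?thesis by (simp add: theta_def)
qed

lemma sum4: "(\<Sum>q<(4::nat). f q) = f 0 + f 1 + f 2 + (f 3 :: int)"
  by (simp add: numeral_eq_Suc lessThan_Suc add.assoc)

lemma prev_fstep:
  assumes "q < (4::nat)" shows "((q + 3) mod 4 + 1) mod 4 = q"
proof -
  have "q = 0 \<or> q = 1 \<or> q = 2 \<or> q = 3" using assms by linarith
  then show ?thesis by auto
qed

lemma alg4: "(a - b) * B + (c - a) * Z + (a - b) * A + (2*b - a - c) * Z = (a - b) * (A + B - 2*Z)"
  for a b c A B Z :: int
  by (simp add: algebra_simps)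

lemma crossing_local:
  fixes a b c d :: int
  assumes "[d = a + c - b] (mod P)"
  shows "[(a - b) * (a + b)^k + (c - a) * (a + c)^k + (d - c) * (c + d)^k + (b - d) * (d + b)^k
        = (a - b) * ((a - b + 2*c)^k + (a + b)^k - 2*(a + c)^k)] (mod P)"
proof -
  let ?d = "a + c - b"
  have "[(a - b) * (a + b)^k + (c - a) * (a + c)^k + (d - c) * (c + d)^k + (b - d) * (d + b)^k
        = (a - b) * (a + b)^k + (c - a) * (a + c)^k + (?d - c) * (c + ?d)^k + (b - ?d) * (?d + b)^k] (mod P)"
    using assms by (intro cong_add cong_mult cong_diff cong_pow cong_refl) auto
  also have "(?d - c) = a - b" by simp
  also have "c + ?d = a - b + 2*c" by simp
  also have "b - ?d = 2*b - a - c" by simp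
  also have "?d + b = a + c" by simp
  also have "(a - b) * (a + b)^k + (c - a) * (a + c)^k + (a - b) * (a - b + 2*c)^k + (2*b - a - c) * (a + c)^k
      = (a - b) * ((a - b + 2*c)^k + (a + b)^k - 2*(a + c)^k)"
    using alg4[of a b "(a + b)^k" c "(a + c)^k" "(a - b + 2*c)^k"] .
  finally show ?thesis .
qed

lemma global_zero:
  fixes C :: "nat \<times> nat \<Rightarrow> int"
  assumes nbi: "\<forall>d\<in>darts n. nb d \<in> darts n \<and> nb d \<noteq> d \<and> nb (nb d) = d"
    and Cf: "\<forall>d\<in>darts n. C (fstep nb d) = C d"
    and dehn: "\<forall>c<n. (C(c,0) + C(c,1)) mod int p = (C(c,3) + C(c,2)) mod int p"
  shows "[(\<Sum>c<n. (C(c,0) - C(c,3)) * ((C(c,0) - C(c,3) + 2*C(c,1))^k + (C(c,0) + C(c,3))^k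
            - 2*(C(c,0) + C(c,1))^k)) = 0] (mod int p)"
proof -
  define g :: "int \<Rightarrow> int \<Rightarrow> int" where "g x y = (y - x) * (x + y)^k" for x y
  define pr :: "nat \<times> nat \<Rightarrow> nat \<times> nat" where "pr d = (fst d, (snd d + 3) mod 4)" for d
  define h where "h d = g (C (pr d)) (C d)" for d
  have prd: "pr d \<in> darts n" if "d \<in> darts n" for d
    using that by (auto simp: pr_def darts_def)
  have fpr: "fstep nb (pr d) = nb d" if "d \<in> darts n" for d
    using that prev_fstep[of "snd d"] by (auto simp: pr_def darts_def fstep_def)
  have C1: "C (nb d) = C (pr d)" if "d \<in> darts n" for d
    using Cf prd[OF that] fpr[OF that] by metis
  have C2: "C (pr (nb d)) = C d" if "d \<in> darts n" for d
  proof -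
    have "nb d \<in> darts n" using nbi that by blast
    then show ?thesis using Cf prd fpr nbi that by metis
  qed
  have hn: "h (nb d) = - h d" if "d \<in> darts n" for d
    using C1[OF that] C2[OF that] by (simp add: h_def g_def algebra_simps)
  have bij: "bij_betw nb (darts n) (darts n)"
  proof (rule bij_betwI[where g = nb])
    show "nb \<in> darts n \<rightarrow> darts n" using nbi by blast
    show "nb \<in> darts n \<rightarrow> darts n" using nbi by blast
  qed (use nbi in auto)
  have "sum h (darts n) = sum (h \<circ> nb) (darts n)"
    using sum.reindex_bij_betw[OF bij, of h] by simp
  also have "\<dots> = - sum h (darts n)"
    by (simp add: hn sum_negf[symmetric] cong: sum.cong)
  finally have S0: "sum h (darts n) = 0" by simp
  have e: "sum h (darts n) = (\<Sum>c<n. \<Sum>q<4. h (c, q))"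
    unfolding darts_def by (simp add: sum.cartesian_product)
  have cg: "[(\<Sum>c<n. \<Sum>q<4. h (c, q)) = (\<Sum>c<n. (C(c,0) - C(c,3)) * ((C(c,0) - C(c,3) + 2*C(c,1))^k + (C(c,0) + C(c,3))^k
            - 2*(C(c,0) + C(c,1))^k))] (mod int p)"
  proof (rule cong_sum)
    fix c assume c: "c \<in> {..<n}"
    have dc: "[C(c,2) = C(c,0) + C(c,1) - C(c,3)] (mod int p)"
    proof -
      have "(C(c,0) + C(c,1)) mod int p = (C(c,3) + C(c,2)) mod int p" using dehn c by auto
      then have "int p dvd (C(c,0) + C(c,1)) - (C(c,3) + C(c,2))" by (simp add: mod_eq_dvd_iff)
      then have "int p dvd -((C(c,0) + C(c,1)) - (C(c,3) + C(c,2)))" by (simp only: dvd_minus_iff)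
      then show ?thesis by (simp add: cong_iff_dvd_diff algebra_simps)
    qed
    have "(\<Sum>q<4. h (c, q)) = g (C(c,3)) (C(c,0)) + g (C(c,0)) (C(c,1)) + g (C(c,1)) (C(c,2)) + g (C(c,2)) (C(c,3))"
      by (simp add: sum4 h_def pr_def)
    also have "\<dots> = (C(c,0) - C(c,3)) * (C(c,3) + C(c,0))^k + (C(c,1) - C(c,0)) * (C(c,0) + C(c,1))^k
       + (C(c,2) - C(c,1)) * (C(c,1) + C(c,2))^k + (C(c,3) - C(c,2)) * (C(c,2) + C(c,3))^k"
      by (simp add: g_def)
    also have "(C(c,3) + C(c,0)) = (C(c,0) + C(c,3))" by simp
    finally show "[(\<Sum>q<4. h (c, q)) = (C(c,0) - C(c,3)) * ((C(c,0) - C(c,3) + 2*C(c,1))^k + (C(c,0) + C(c,3))^k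
            - 2*(C(c,0) + C(c,1))^k)] (mod int p)"
      using crossing_local[OF dc, of k] by simp
  qed
  from cg have "[0 = (\<Sum>c<n. (C(c,0) - C(c,3)) * ((C(c,0) - C(c,3) + 2*C(c,1))^k + (C(c,0) + C(c,3))^k
            - 2*(C(c,0) + C(c,1))^k))] (mod int p)" unfolding e[symmetric] S0 .
  then show ?thesis by (rule cong_sym)
qed

definition ecoef :: "nat \<Rightarrow> nat \<Rightarrow> int" where
  "ecoef p k = int ((p choose k) div p)"

lemma Nf_expand:
  fixes A B Z s w :: int
  assumes p: "prime p" and h: "A + B = 2*Z"
  shows "Nf p (s*A + w) (s*B + w) (s*Z + w) = s^p * Nf p A B Z
     + int p * (\<Sum>k\<in>{1..<p}. ecoef p k * s^k * w^(p-k) * (A^k + B^k - 2*Z^k))"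
proof -
  define F where "F k = int (p choose k) * s^k * w^(p-k) * (A^k + B^k - 2*Z^k)" for k
  have pp: "p > 0" using p prime_gt_0_nat by blast
  have "Nf p (s*A + w) (s*B + w) (s*Z + w) = (\<Sum>k\<le>p. F k)"
    unfolding Nf_def binomial_ring F_def
    by (simp add: sum_subtractf sum.distrib sum_distrib_left algebra_simps power_mult_distrib)
  also have "(\<Sum>k\<le>p. F k) = F p + (F 0 + (\<Sum>k\<in>{1..<p}. F k))"
  proof -
    have "(\<Sum>k\<le>p. F k) = F p + (\<Sum>k\<in>{..p} - {p}. F k)" by (simp add: sum.remove)
    also have "{..p} - {p} = insert 0 {1..<p}" using pp by auto
    also have "(\<Sum>k\<in>insert 0 {1..<p}. F k) = F 0 + (\<Sum>k\<in>{1..<p}. F k)" by simp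
    finally show ?thesis .
  qed
  also have "F 0 = 0" by (simp add: F_def)
  also have "F p = s^p * Nf p A B Z" by (simp add: F_def Nf_def power_mult_distrib)
  also have "(\<Sum>k\<in>{1..<p}. F k) = int p * (\<Sum>k\<in>{1..<p}. ecoef p k * s^k * w^(p-k) * (A^k + B^k - 2*Z^k))"
    unfolding sum_distrib_left
  proof (rule sum.cong[OF refl])
    fix k assume k: "k \<in> {1..<p}"
    have "p dvd (p choose k)" using dvd_choose_prime[of k p] k pp p by auto
    then have "int (p choose k) = int p * ecoef p k" unfolding ecoef_def
      by (metis dvd_mult_div_cancel of_nat_mult)
    then show "F k = int p * (ecoef p k * s^k * w^(p-k) * (A^k + B^k - 2*Z^k))"
      by (simp add: F_def algebra_simps)
  qed
  finally show ?thesis by simp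
qed

lemma Tf_expand:
  fixes u A B Z s w :: int
  assumes p: "prime p" and h: "A + B = 2*Z"
  shows "Tf p (s*u) (s*A + w) (s*B + w) (s*Z + w) = (s^(p+1) * (u * (Nf p A B Z div int p))
     + (\<Sum>k\<in>{1..<p}. ecoef p k * s^(k+1) * w^(p-k) * (u * (A^k + B^k - 2*Z^k)))) mod int p"
proof -
  have "int p dvd Nf p A B Z" using Nf_dvd[OF p] h by simp
  then obtain x where x: "Nf p A B Z = int p * x" by blast
  have pp: "int p \<noteq> 0" using p by auto
  have "Nf p (s*A + w) (s*B + w) (s*Z + w) div int p
      = s^p * x + (\<Sum>k\<in>{1..<p}. ecoef p k * s^k * w^(p-k) * (A^k + B^k - 2*Z^k))"
    unfolding Nf_expand[OF p h] x using pp by (simp add: algebra_simps)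
  moreover have "Nf p A B Z div int p = x" using x pp by simp
  ultimately show ?thesis unfolding Tf_def
    by (simp add: sum_distrib_left algebra_simps)
qed

lemma cong_eqI: "[a = b] (mod m) \<Longrightarrow> b = c \<Longrightarrow> [a = c] (mod m)"
  by simp

lemma cong_mod_eq: "[a = b] (mod m) \<Longrightarrow> a mod m = b mod m"
  by (simp add: cong_def)

theorem proposition4p5:
  fixes p n :: nat and nb :: "nat \<times> nat \<Rightarrow> nat \<times> nat"
    and C :: "nat \<times> nat \<Rightarrow> int" and s t :: int and sel sel' :: "nat \<Rightarrow> nat"
  assumes "prime p" and "odd p"
    and "knot_diagram n nb"
    and "dehn_colorable p n nb"
    and "dehn_coloring p n nb C"
    and "\<not> int p dvd s"
    and "\<forall>c<n. sel c < 4" and "\<forall>c<n. sel' c < 4"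
  shows "theta p (W n (\<lambda>x. (s * C x + t) mod int p) sel')
         = (s ^ 2 * theta p (W n C sel)) mod int p"
proof -
  note p = assms(1)
  let ?P = "int p"
  define C' where "C' = (\<lambda>x. (s * C x + t) mod int p)"
  have nbi: "\<forall>d\<in>darts n. nb d \<in> darts n \<and> nb d \<noteq> d \<and> nb (nb d) = d"
    using assms(3) by (simp add: knot_diagram_def)
  have Cf: "\<forall>d\<in>darts n. C (fstep nb d) = C d" and
    dehn: "\<forall>c<n. (C(c,0) + C(c,1)) mod ?P = (C(c,3) + C(c,2)) mod ?P"
    using assms(5) by (auto simp: dehn_coloring_def)
  have dehn': "(C'(c,0) + C'(c,1)) mod ?P = (C'(c,3) + C'(c,2)) mod ?P" if c: "c < n" for c
  proof -
    have "(C'(c,0) + C'(c,1)) mod ?P = ((s*C(c,0)+t) + (s*C(c,1)+t)) mod ?P"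
      unfolding C'_def by (rule mod_add_eq)
    also have "\<dots> = (s * (C(c,0) + C(c,1)) + 2*t) mod ?P" by (simp add: algebra_simps)
    also have "\<dots> = (s * ((C(c,0) + C(c,1)) mod ?P) + 2*t) mod ?P" by (metis mod_add_left_eq mod_mult_right_eq)
    also have "\<dots> = (s * ((C(c,3) + C(c,2)) mod ?P) + 2*t) mod ?P" using dehn c by simp
    also have "\<dots> = (s * (C(c,3) + C(c,2)) + 2*t) mod ?P" by (metis mod_add_left_eq mod_mult_right_eq)
    also have "\<dots> = ((s*C(c,3)+t) + (s*C(c,2)+t)) mod ?P" by (simp add: algebra_simps)
    also have "\<dots> = (C'(c,3) + C'(c,2)) mod ?P"
      unfolding C'_def by (rule mod_add_eq[symmetric])
    finally show ?thesis .
  qed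
  have LHS: "theta p (W n C' sel') = (\<Sum>c<n. Vc p C' c) mod ?P"
    unfolding theta_W
    by (rule cong_mod_eq, rule cong_sum, rule cross_indep[OF p]) (use dehn' assms(8) in auto)
  have RHS: "theta p (W n C sel) = (\<Sum>c<n. Vc p C c) mod ?P"
    unfolding theta_W
    by (rule cong_mod_eq, rule cong_sum, rule cross_indep[OF p]) (use dehn assms(7) in auto)
  define u where "u c = C(c,0) - C(c,3)" for c
  define A where "A c = C(c,0) - C(c,3) + 2*C(c,1)" for c
  define B where "B c = C(c,0) + C(c,3)" for c
  define Z where "Z c = C(c,0) + C(c,1)" for c
  define X where "X c = u c * (Nf p (A c) (B c) (Z c) div ?P)" for c
  define Y where "Y k c = u c * (A c ^ k + B c ^ k - 2 * Z c ^ k)" for k c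
  define w where "w = 2 * t"
  have hABZ: "A c + B c = 2 * Z c" for c by (simp add: A_def B_def Z_def)
  have VC: "Vc p C c = X c mod ?P" for c
    by (simp add: Vc_def Tf_def X_def u_def A_def B_def Z_def)
  have VC': "Vc p C' c = (s^(p+1) * X c + (\<Sum>k\<in>{1..<p}. ecoef p k * s^(k+1) * w^(p-k) * Y k c)) mod ?P" for c
  proof -
    have "Vc p C' c = Tf p (s * u c) (s * A c + w) (s * B c + w) (s * Z c + w)"
      unfolding Vc_def
    proof (rule Tf_cong[OF p])
      have cc: "[C'(c,i) = s*C(c,i) + t] (mod ?P)" for i by (simp add: C'_def cong_def)
      show "[C'(c,0) - C'(c,3) = s * u c] (mod ?P)"
        apply (rule cong_eqI)
         apply (rule cong_diff)
          apply (rule cc)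
          apply (rule cc)
        apply (simp add: u_def algebra_simps)
        done
      show "[C'(c,0) - C'(c,3) + 2 * C'(c,1) = s * A c + w] (mod ?P)"
        by (rule cong_eqI[OF cong_add[OF cong_diff[OF cc cc] cong_scalar_left[OF cc]]]) (simp add: A_def w_def algebra_simps)
      show "[C'(c,0) + C'(c,3) = s * B c + w] (mod ?P)"
        by (rule cong_eqI[OF cong_add[OF cc cc]]) (simp add: B_def w_def algebra_simps)
      show "[C'(c,0) + C'(c,1) = s * Z c + w] (mod ?P)"
        by (rule cong_eqI[OF cong_add[OF cc cc]]) (simp add: Z_def w_def algebra_simps)
      have "C'(c,0) - C'(c,3) + 2 * C'(c,1) + (C'(c,0) + C'(c,3)) = 2 * (C'(c,0) + C'(c,1))"
        by (simp add: algebra_simps)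
      then show "[C'(c,0) - C'(c,3) + 2 * C'(c,1) + (C'(c,0) + C'(c,3)) = 2 * (C'(c,0) + C'(c,1))] (mod ?P)"
        by simp
    qed
    also have "\<dots> = (s^(p+1) * X c + (\<Sum>k\<in>{1..<p}. ecoef p k * s^(k+1) * w^(p-k) * Y k c)) mod ?P"
      unfolding Tf_expand[OF p hABZ] X_def Y_def ..
    finally show ?thesis .
  qed
  have Y0: "[(\<Sum>c<n. Y k c) = 0] (mod ?P)" for k
    unfolding Y_def u_def A_def B_def Z_def using global_zero[OF nbi Cf dehn] .
  have "[(\<Sum>c<n. Vc p C' c) = (\<Sum>c<n. s^(p+1) * X c + (\<Sum>k\<in>{1..<p}. ecoef p k * s^(k+1) * w^(p-k) * Y k c))] (mod ?P)"
    unfolding VC' by (rule cong_sum) (simp add: cong_def)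
  also have "(\<Sum>c<n. s^(p+1) * X c + (\<Sum>k\<in>{1..<p}. ecoef p k * s^(k+1) * w^(p-k) * Y k c))
     = s^(p+1) * (\<Sum>c<n. X c) + (\<Sum>k\<in>{1..<p}. ecoef p k * s^(k+1) * w^(p-k) * (\<Sum>c<n. Y k c))"
    by (simp add: sum.distrib sum_distrib_left mult.assoc) (rule sum.swap)
  also have "[\<dots> = s^(p+1) * (\<Sum>c<n. X c) + (\<Sum>k\<in>{1..<p}. ecoef p k * s^(k+1) * w^(p-k) * 0)] (mod ?P)"
    by (intro cong_add cong_refl cong_sum cong_scalar_left Y0)
  also have "s^(p+1) * (\<Sum>c<n. X c) + (\<Sum>k\<in>{1..<p}. ecoef p k * s^(k+1) * w^(p-k) * 0) = s^p * s * (\<Sum>c<n. X c)"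
    by simp
  also have "[s^p * s * (\<Sum>c<n. X c) = s * s * (\<Sum>c<n. X c mod ?P)] (mod ?P)"
    by (intro cong_mult fermat_int[OF p] cong_refl cong_sum) (simp add: cong_def)
  finally have main: "[(\<Sum>c<n. Vc p C' c) = s^2 * (\<Sum>c<n. Vc p C c)] (mod ?P)"
    by (simp add: VC power2_eq_square)
  show ?thesis
    unfolding C'_def[symmetric] LHS RHS
    using main by (simp add: cong_def mod_mult_right_eq)
qed

end
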